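(* Let $G\in\mathcal{D}_n$ and let $\varphi_1,\varphi_2$ be two $\mathbb{T}$-gains on $G$. Then $\sigma(A(\Phi_1))=\sigma(A(\Phi_2))$ if and only if $\Re(\varphi_1(C))=\Re(\varphi_2(C))$ for all cycles $C$ of $G$, where $\Phi_j=(G,\varphi_j)$.
   Context: Graphs are finite, simple and undirected. $\mathcal{D}_n$ is the collection of all connected graphs $G$ on $n$ vertices such that for each $k$ with $3\le k\le n$, $G$ has at most one cycle of length $k$. $\mathbb{T}=\{z\in\mathbb{C}:|z|=1\}$. A $\mathbb{T}$-gain on $G$ is a map $\varphi$ from oriented edges to $\mathbb{T}$ with $\varphi(\overrightarrow{e_{ts}})=\varphi(\overrightarrow{e_{st}})^{-1}$; $A(\Phi)$ for $\Phi=(G,\varphi)$ is the Hermitian matrix with $(s,t)$ entry $\varphi(\overrightarrow{e_{st}})$ if $v_s\sim v_t$, else $0$; $\sigma(\cdot)$ denotes the spectrum. The gain $\varphi(\overrightarrow{C})$ of a directed cycle is the product of the gains of its oriented edges; the two directions of a cycle $C$ give conjugate gains, and $\Re(\varphi(C))$ denotes their common real part. *)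

theory Defs
  imports "Jordan_Normal_Form.Matrix" "Jordan_Normal_Form.Char_Poly"
    "HOL-Computational_Algebra.Fundamental_Theorem_Algebra"
begin

definition simple_graph :: "nat \<Rightarrow> (nat \<Rightarrow> nat \<Rightarrow> bool) \<Rightarrow> bool" where
  "simple_graph n E \<longleftrightarrow> (\<forall>x y. E x y \<longrightarrow> x < n \<and> y < n \<and> x \<noteq> y \<and> E y x)"

definition connected_graph :: "nat \<Rightarrow> (nat \<Rightarrow> nat \<Rightarrow> bool) \<Rightarrow> bool" where
  "connected_graph n E \<longleftrightarrow> simple_graph n E \<and> (\<forall>u<n. \<forall>v<n. E\<^sup>*\<^sup>* u v)"

text \<open>A cycle, traversed in a fixed direction from a fixed start vertex,
  given by its list of (distinct) vertices v_0, ..., v_{k-1}, k \<ge> 3.\<close>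
definition is_cycle :: "nat \<Rightarrow> (nat \<Rightarrow> nat \<Rightarrow> bool) \<Rightarrow> nat list \<Rightarrow> bool" where
  "is_cycle n E vs \<longleftrightarrow> length vs \<ge> 3 \<and> distinct vs \<and> set vs \<subseteq> {0..<n} \<and>
     (\<forall>i < length vs. E (vs ! i) (vs ! ((i + 1) mod length vs)))"

definition cycle_edges :: "nat list \<Rightarrow> nat set set" where
  "cycle_edges vs = {{vs ! i, vs ! ((i + 1) mod length vs)} | i. i < length vs}"

text \<open>The class D_n: connected graphs on n vertices having, for every length k,
  at most one cycle (as a subgraph) of length k.\<close>
definition in_D :: "nat \<Rightarrow> (nat \<Rightarrow> nat \<Rightarrow> bool) \<Rightarrow> bool" where
  "in_D n E \<longleftrightarrow> connected_graph n E \<and>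
     (\<forall>xs ys. is_cycle n E xs \<and> is_cycle n E ys \<and> length xs = length ys
        \<longrightarrow> cycle_edges xs = cycle_edges ys)"

text \<open>A T-gain: phi s t is the gain of the oriented edge from v_s to v_t.\<close>
definition T_gain :: "(nat \<Rightarrow> nat \<Rightarrow> bool) \<Rightarrow> (nat \<Rightarrow> nat \<Rightarrow> complex) \<Rightarrow> bool" where
  "T_gain E \<phi> \<longleftrightarrow> (\<forall>s t. E s t \<longrightarrow> cmod (\<phi> s t) = 1 \<and> \<phi> t s = inverse (\<phi> s t))"

definition gain_adj :: "nat \<Rightarrow> (nat \<Rightarrow> nat \<Rightarrow> bool) \<Rightarrow> (nat \<Rightarrow> nat \<Rightarrow> complex) \<Rightarrow> complex mat" where
  "gain_adj n E \<phi> = mat n n (\<lambda>(s, t). if E s t then \<phi> s t else 0)"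

definition cycle_gain :: "(nat \<Rightarrow> nat \<Rightarrow> complex) \<Rightarrow> nat list \<Rightarrow> complex" where
  "cycle_gain \<phi> vs = (\<Prod>i<length vs. \<phi> (vs ! i) (vs ! ((i + 1) mod length vs)))"

definition spec :: "complex mat \<Rightarrow> complex multiset" where
  "spec A = proots (char_poly A)"

end

theory Submission
  imports Defs "HOL-Combinatorics.Orbits"
begin


abbreviation pinv :: "(nat \<Rightarrow> nat) \<Rightarrow> nat \<Rightarrow> nat" where "pinv p \<equiv> Hilbert_Choice.inv p"

definition mv :: "(nat \<Rightarrow> nat) \<Rightarrow> nat set" where "mv p = {i. p i \<noteq> i}"
definition oprod :: "(nat \<Rightarrow> nat \<Rightarrow> complex) \<Rightarrow> (nat \<Rightarrow> nat) \<Rightarrow> nat \<Rightarrow> complex" where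
  "oprod a p i = (\<Prod>j\<in>orbit p i. a j (p j))"
definition cp :: "(nat \<Rightarrow> nat \<Rightarrow> complex) \<Rightarrow> (nat \<Rightarrow> nat) \<Rightarrow> complex" where
  "cp a p = (\<Prod>i\<in>mv p. a i (p i))"
definition Uset :: "(nat \<Rightarrow> nat \<Rightarrow> complex) \<Rightarrow> (nat \<Rightarrow> nat \<Rightarrow> complex) \<Rightarrow> (nat \<Rightarrow> nat) \<Rightarrow> nat set" where
  "Uset a1 a2 p = {i \<in> mv p. oprod a2 p i \<noteq> oprod a1 p i}"
definition Tp :: "(nat \<Rightarrow> nat \<Rightarrow> complex) \<Rightarrow> (nat \<Rightarrow> nat \<Rightarrow> complex) \<Rightarrow> (nat \<Rightarrow> nat) \<Rightarrow> nat \<Rightarrow> nat" where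
  "Tp a1 a2 p = (\<lambda>i. if i \<in> Uset a1 a2 p then pinv p i else p i)"

lemma orb_self: "permutation p \<Longrightarrow> i \<in> orbit p i"
  by (rule permutation_self_in_orbit)

lemma orb_same: "permutation p \<Longrightarrow> j \<in> orbit p i \<Longrightarrow> orbit p j = orbit p i"
  by (meson cyclic_on_orbit' orbit_cyclic_eq3)

lemma orb_step: "j \<in> orbit p i \<Longrightarrow> p j \<in> orbit p i"
  by (rule orbit.step)

lemma orb_inv_step: "permutation p \<Longrightarrow> j \<in> orbit p i \<Longrightarrow> pinv p j \<in> orbit p i"
  by (metis orbit.step orbit_inv_eq)

lemma orb_finite: "permutation p \<Longrightarrow> finite (orbit p i)"
  by (simp add: finite_orbit orb_self)

lemma orb_mv: assumes "permutation p" "i \<in> mv p" "j \<in> orbit p i" shows "j \<in> mv p"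
proof (rule ccontr)
  assume "j \<notin> mv p"
  hence "p j = j" by (simp add: mv_def)
  hence "orbit p j = {j}" by (simp add: orbit_eq_singleton_iff)
  hence "orbit p i = {j}" using orb_same[OF assms(1,3)] by simp
  hence "i = j" using orb_self[OF assms(1), of i] by simp
  thus False using assms(2) \<open>p j = j\<close> by (simp add: mv_def)
qed

lemma mv_sub: "p permutes S \<Longrightarrow> mv p \<subseteq> S"
  unfolding mv_def using permutes_not_in by fastforce

lemma mv_finite: "permutation p \<Longrightarrow> finite (mv p)"
  by (meson finite_subset mv_sub permutation_permutes)

lemma prod_orbits:
  fixes f g :: "nat \<Rightarrow> complex"
  assumes p: "permutation p" and V: "finite V" "\<And>i. i \<in> V \<Longrightarrow> orbit p i \<subseteq> V"
    and eq: "\<And>i. i \<in> V \<Longrightarrow> prod f (orbit p i) = prod g (orbit p i)"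
  shows "prod f V = prod g V"
proof -
  have VU: "V = \<Union> (orbit p ` V)" using V(2) orb_self[OF p] by blast
  have fin: "finite (orbit p ` V)" using V by simp
  have fin2: "\<forall>A\<in>orbit p ` V. finite A" using orb_finite[OF p] by blast
  have disj: "\<forall>A\<in>orbit p ` V. \<forall>B\<in>orbit p ` V. A \<noteq> B \<longrightarrow> A \<inter> B = {}"
    using orb_same[OF p] by blast
  have "prod f (\<Union> (orbit p ` V)) = prod (prod f) (orbit p ` V)"
    using prod.Union_disjoint[OF fin2 disj] by simp
  hence "prod f V = prod (prod f) (orbit p ` V)" using VU by simp
  also have "\<dots> = prod (prod g) (orbit p ` V)"
    by (rule prod.cong[OF refl]) (use eq in blast)
  also have "\<dots> = prod g (\<Union> (orbit p ` V))"
    using prod.Union_disjoint[OF fin2 disj, of g] by simp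
  also have "\<dots> = prod g V" using VU by simp
  finally show ?thesis .
qed

definition herm :: "(nat \<Rightarrow> nat \<Rightarrow> complex) \<Rightarrow> bool" where
  "herm a \<longleftrightarrow> (\<forall>s t. cnj (a s t) = a t s)"

definition good :: "(nat \<Rightarrow> nat \<Rightarrow> complex) \<Rightarrow> (nat \<Rightarrow> nat \<Rightarrow> complex) \<Rightarrow> (nat \<Rightarrow> nat) \<Rightarrow> bool" where
  "good a1 a2 p \<longleftrightarrow> (\<forall>i\<in>mv p. oprod a2 p i = oprod a1 p i \<or> oprod a2 p i = cnj (oprod a1 p i))"

lemma bij_inv_set:
  assumes p: "permutation p" and V: "\<And>j. j \<in> V \<Longrightarrow> p j \<in> V" "\<And>j. j \<in> V \<Longrightarrow> pinv p j \<in> V"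
  shows "bij_betw p V V"
proof -
  have b: "bij p" using permutation_bijective[OF p] .
  have "p ` V = V"
  proof
    show "p ` V \<subseteq> V" using V(1) by blast
    show "V \<subseteq> p ` V"
    proof
      fix j assume "j \<in> V"
      hence "p (pinv p j) = j" using b by (simp add: surj_f_inv_f bij_is_surj)
      thus "j \<in> p ` V" using V(2)[OF \<open>j \<in> V\<close>] by (metis imageI)
    qed
  qed
  moreover have "inj_on p V" by (meson b bij_def inj_on_subset subset_UNIV)
  ultimately show ?thesis by (simp add: bij_betw_def)
qed

lemma oprod_inv:
  assumes p: "permutation p" and h: "herm a"
  shows "(\<Prod>j\<in>orbit p i. a j (pinv p j)) = cnj (oprod a p i)"
proof -
  have b: "bij p" using permutation_bijective[OF p] .
  have bb: "bij_betw p (orbit p i) (orbit p i)"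
    by (rule bij_inv_set[OF p]) (auto intro: orb_step orb_inv_step[OF p])
  have "(\<Prod>j\<in>orbit p i. a j (pinv p j)) = (\<Prod>j\<in>orbit p i. a (p j) (pinv p (p j)))"
    using prod.reindex_bij_betw[OF bb, of "\<lambda>j. a j (pinv p j)"] by simp
  also have "\<dots> = (\<Prod>j\<in>orbit p i. cnj (a j (p j)))"
    using b h by (simp add: inv_f_f bij_is_inj herm_def)
  also have "\<dots> = cnj (oprod a p i)" by (simp add: oprod_def)
  finally show ?thesis .
qed

context
  fixes S :: "nat set" and p :: "nat \<Rightarrow> nat" and a1 a2 :: "nat \<Rightarrow> nat \<Rightarrow> complex"
  assumes S: "finite S" and pS: "p permutes S" and h1: "herm a1" and h2: "herm a2"
begin

lemma pp: "permutation p" using permutes_imp_permutation[OF S pS] .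

lemma pbij: "bij p" using permutation_bijective[OF pp] .

lemma pinv1[simp]: "p (pinv p x) = x" using pbij by (simp add: surj_f_inv_f bij_is_surj)
lemma pinv2[simp]: "pinv p (p x) = x" using pbij by (simp add: inv_f_f bij_is_inj)

lemma U_orb: "i \<in> Uset a1 a2 p \<Longrightarrow> j \<in> orbit p i \<Longrightarrow> j \<in> Uset a1 a2 p"
  unfolding Uset_def oprod_def using orb_mv[OF pp] orb_same[OF pp] by auto

lemma nU_orb: "i \<notin> Uset a1 a2 p \<Longrightarrow> j \<in> orbit p i \<Longrightarrow> j \<notin> Uset a1 a2 p"
  using U_orb orb_same[OF pp] orb_self[OF pp] by metis

lemma U_p: "j \<in> Uset a1 a2 p \<longleftrightarrow> p j \<in> Uset a1 a2 p"
  by (metis U_orb nU_orb orb_self orb_step pp)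

lemma U_p1: "j \<in> Uset a1 a2 p \<Longrightarrow> p j \<in> Uset a1 a2 p" using U_p by blast
lemma U_p2: "p j \<in> Uset a1 a2 p \<Longrightarrow> j \<in> Uset a1 a2 p" using U_p by blast
lemma U_i1: "j \<in> Uset a1 a2 p \<Longrightarrow> pinv p j \<in> Uset a1 a2 p" using U_p2[of "pinv p j"] by simp
lemma U_i2: "pinv p j \<in> Uset a1 a2 p \<Longrightarrow> j \<in> Uset a1 a2 p" using U_p1[of "pinv p j"] by simp

lemma U_mv: "Uset a1 a2 p \<subseteq> mv p" unfolding Uset_def by auto

lemma mv_S: "mv p \<subseteq> S" using mv_sub[OF pS] .

lemma Tp_U: "i \<in> Uset a1 a2 p \<Longrightarrow> Tp a1 a2 p i = pinv p i" by (simp add: Tp_def)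
lemma Tp_nU: "i \<notin> Uset a1 a2 p \<Longrightarrow> Tp a1 a2 p i = p i" by (simp add: Tp_def)

definition "q1 = (\<lambda>i. if i \<in> Uset a1 a2 p then p i else i)"
definition "q2 = (\<lambda>i. if i \<in> Uset a1 a2 p then i else p i)"

lemma q1_perm: "q1 permutes (Uset a1 a2 p)"
proof (rule bij_imp_permutes)
  have "bij_betw p (Uset a1 a2 p) (Uset a1 a2 p)"
    by (rule bij_inv_set[OF pp]) (use U_p1 U_i1 in auto)
  thus "bij_betw q1 (Uset a1 a2 p) (Uset a1 a2 p)"
    by (rule bij_betw_cong[THEN iffD1, rotated]) (simp add: q1_def)
qed (simp add: q1_def)

lemma q2_perm: "q2 permutes (S - Uset a1 a2 p)"
proof (rule bij_imp_permutes)
  have "bij_betw p (S - Uset a1 a2 p) (S - Uset a1 a2 p)"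
    by (rule bij_inv_set[OF pp]) (use U_p2 U_i2 permutes_in_image[OF pS] permutes_inv[OF pS, THEN permutes_in_image] in blast)+
  thus "bij_betw q2 (S - Uset a1 a2 p) (S - Uset a1 a2 p)"
    by (rule bij_betw_cong[THEN iffD1, rotated]) (simp add: q2_def)
next
  fix x assume "x \<notin> S - Uset a1 a2 p"
  thus "q2 x = x" using permutes_not_in[OF pS] by (auto simp: q2_def)
qed

lemma p_dec: "p = q1 \<circ> q2"
proof
  fix i show "p i = (q1 \<circ> q2) i"
    using U_p1[of i] U_p2[of i] by (auto simp: q1_def q2_def)
qed

lemma pinv_q1: "i \<in> Uset a1 a2 p \<Longrightarrow> pinv q1 i = pinv p i"
  using permutes_inv_eq[OF q1_perm] U_i1[of i] by (auto simp: q1_def)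

lemma Tp_dec: "Tp a1 a2 p = pinv q1 \<circ> q2"
proof
  fix i show "Tp a1 a2 p i = (pinv q1 \<circ> q2) i"
  proof (cases "i \<in> Uset a1 a2 p")
    case True thus ?thesis by (simp add: Tp_U pinv_q1 q2_def)
  next
    case False
    hence "p i \<notin> Uset a1 a2 p" using U_p2 by blast
    hence "q1 (p i) = p i" by (simp add: q1_def)
    hence "pinv q1 (p i) = p i" using permutes_inv_eq[OF q1_perm] by blast
    thus ?thesis using False by (simp add: Tp_nU q2_def)
  qed
qed

lemma US: "Uset a1 a2 p \<subseteq> S" using U_mv mv_S by blast

lemma Tp_perm: "Tp a1 a2 p permutes S"
proof -
  have 1: "q2 permutes S" using permutes_subset[OF q2_perm] by blast
  have 2: "pinv q1 permutes S" using permutes_subset[OF permutes_inv[OF q1_perm] US] .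
  show ?thesis unfolding Tp_dec using permutes_compose[OF 1 2] .
qed

lemma Tp_sign: "sign (Tp a1 a2 p) = sign p"
proof -
  have f: "finite (Uset a1 a2 p)" "finite (S - Uset a1 a2 p)" using US S finite_subset by blast+
  have pq1: "permutation q1" using permutes_imp_permutation[OF f(1) q1_perm] .
  have pq2: "permutation q2" using permutes_imp_permutation[OF f(2) q2_perm] .
  have "sign p = sign (q1 \<circ> q2)" by (rule arg_cong[OF p_dec])
  also have "\<dots> = sign q1 * sign q2" by (simp add: sign_compose pq1 pq2)
  also have "\<dots> = sign (pinv q1 \<circ> q2)" by (simp add: sign_compose pq1 pq2 permutation_inverse sign_inverse)
  finally show ?thesis unfolding Tp_dec by simp
qed

lemma Tp_fix: "Tp a1 a2 p i = i \<longleftrightarrow> p i = i"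
  by (cases "i \<in> Uset a1 a2 p") (auto simp: Tp_U Tp_nU permutes_inv_eq[OF pS])

lemma Tp_mv: "mv (Tp a1 a2 p) = mv p"
  unfolding mv_def using Tp_fix by auto

lemma Tp_orbit: "orbit (Tp a1 a2 p) i = orbit p i"
proof (cases "i \<in> Uset a1 a2 p")
  case True
  have "orbit (Tp a1 a2 p) i = orbit (pinv p) i"
  proof (rule orbit_cong)
    show "i \<in> orbit (pinv p) i" using orb_self[OF permutation_inverse[OF pp]] .
    fix s assume "s \<in> orbit (pinv p) i"
    hence "s \<in> orbit p i" using orbit_inv_eq[OF pp] by simp
    thus "Tp a1 a2 p s = pinv p s" using U_orb[OF True] Tp_U by blast
  qed
  thus ?thesis using orbit_inv_eq[OF pp] by simp
next
  case False
  show ?thesis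
  proof (rule orbit_cong)
    show "i \<in> orbit p i" using orb_self[OF pp] .
    fix s assume "s \<in> orbit p i"
    thus "Tp a1 a2 p s = p s" using nU_orb[OF False] Tp_nU by blast
  qed
qed

lemma Tp_oprod_U: "i \<in> Uset a1 a2 p \<Longrightarrow> herm a \<Longrightarrow> oprod a (Tp a1 a2 p) i = cnj (oprod a p i)"
proof -
  assume i: "i \<in> Uset a1 a2 p" and h: "herm a"
  have "oprod a (Tp a1 a2 p) i = (\<Prod>j\<in>orbit p i. a j (pinv p j))"
    unfolding oprod_def Tp_orbit using U_orb[OF i] Tp_U by (intro prod.cong) auto
  thus ?thesis using oprod_inv[OF pp h] by simp
qed

lemma Tp_oprod_nU: "i \<notin> Uset a1 a2 p \<Longrightarrow> oprod a (Tp a1 a2 p) i = oprod a p i"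
  unfolding oprod_def Tp_orbit using nU_orb Tp_nU by (intro prod.cong) auto

lemma Tp_Uset: "Uset a1 a2 (Tp a1 a2 p) = Uset a1 a2 p"
proof -
  { fix i assume "i \<in> mv p"
    have "oprod a2 (Tp a1 a2 p) i \<noteq> oprod a1 (Tp a1 a2 p) i \<longleftrightarrow> i \<in> Uset a1 a2 p"
    proof (cases "i \<in> Uset a1 a2 p")
      case True thus ?thesis using Tp_oprod_U[OF True h1] Tp_oprod_U[OF True h2]
        by (simp add: Uset_def)
    next
      case False thus ?thesis using Tp_oprod_nU[OF False] \<open>i \<in> mv p\<close> by (simp add: Uset_def)
    qed }
  thus ?thesis unfolding Uset_def[of _ _ "Tp a1 a2 p"] Tp_mv using U_mv by auto
qed

lemma Tp_Tp: "Tp a1 a2 (Tp a1 a2 p) = p"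
proof
  fix i
  show "Tp a1 a2 (Tp a1 a2 p) i = p i"
  proof (cases "i \<in> Uset a1 a2 p")
    case True
    have "Tp a1 a2 p (p i) = i" using U_p1[OF True] Tp_U by simp
    hence "pinv (Tp a1 a2 p) i = p i" using permutes_inv_eq[OF Tp_perm] by blast
    have "i \<in> Uset a1 a2 (Tp a1 a2 p)" using True Tp_Uset by simp
    hence "Tp a1 a2 (Tp a1 a2 p) i = pinv (Tp a1 a2 p) i" unfolding Tp_def[of _ _ "Tp a1 a2 p"] by simp
    thus ?thesis using \<open>pinv (Tp a1 a2 p) i = p i\<close> by simp
  next
    case False
    hence "i \<notin> Uset a1 a2 (Tp a1 a2 p)" using Tp_Uset by simp
    hence "Tp a1 a2 (Tp a1 a2 p) i = Tp a1 a2 p i" unfolding Tp_def[of _ _ "Tp a1 a2 p"] by simp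
    thus ?thesis using False Tp_nU by simp
  qed
qed

lemma Tp_cp:
  assumes g: "good a1 a2 p"
  shows "cp a2 (Tp a1 a2 p) = cp a1 p"
proof -
  let ?U = "Uset a1 a2 p"
  have fm: "finite (mv p)" using mv_finite[OF pp] .
  have fU: "finite ?U" using U_mv fm finite_subset by blast
  have fD: "finite (mv p - ?U)" using fm by simp
  have A: "(\<Prod>i\<in>?U. a2 i (pinv p i)) = (\<Prod>i\<in>?U. a1 i (p i))"
  proof (rule prod_orbits[OF pp fU])
    show "\<And>i. i \<in> ?U \<Longrightarrow> orbit p i \<subseteq> ?U" using U_orb by blast
    fix i assume i: "i \<in> ?U"
    hence "oprod a2 p i = cnj (oprod a1 p i)" using g U_mv unfolding good_def Uset_def by auto
    hence "cnj (oprod a2 p i) = oprod a1 p i" by simp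
    thus "(\<Prod>j\<in>orbit p i. a2 j (pinv p j)) = (\<Prod>j\<in>orbit p i. a1 j (p j))"
      using oprod_inv[OF pp h2, of i] unfolding oprod_def by simp
  qed
  have B: "(\<Prod>i\<in>mv p - ?U. a2 i (p i)) = (\<Prod>i\<in>mv p - ?U. a1 i (p i))"
  proof (rule prod_orbits[OF pp fD])
    show "\<And>i. i \<in> mv p - ?U \<Longrightarrow> orbit p i \<subseteq> mv p - ?U" using nU_orb orb_mv[OF pp] by blast
    fix i assume i: "i \<in> mv p - ?U"
    thus "(\<Prod>j\<in>orbit p i. a2 j (p j)) = (\<Prod>j\<in>orbit p i. a1 j (p j))"
      by (simp add: Uset_def oprod_def)
  qed
  have "cp a2 (Tp a1 a2 p) = (\<Prod>i\<in>mv p - ?U. a2 i (Tp a1 a2 p i)) * (\<Prod>i\<in>?U. a2 i (Tp a1 a2 p i))"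
    unfolding cp_def Tp_mv using prod.subset_diff[OF U_mv fm] by simp
  also have "\<dots> = (\<Prod>i\<in>mv p - ?U. a2 i (p i)) * (\<Prod>i\<in>?U. a2 i (pinv p i))"
    using Tp_U Tp_nU by (intro arg_cong2[where f="(*)"] prod.cong) auto
  also have "\<dots> = (\<Prod>i\<in>mv p - ?U. a1 i (p i)) * (\<Prod>i\<in>?U. a1 i (p i))" using A B by simp
  also have "\<dots> = cp a1 p" unfolding cp_def using prod.subset_diff[OF U_mv fm, of "\<lambda>i. a1 i (p i)"] by simp
  finally show ?thesis .
qed

end


definition adj :: "(nat \<Rightarrow> nat \<Rightarrow> bool) \<Rightarrow> (nat \<Rightarrow> nat \<Rightarrow> complex) \<Rightarrow> nat \<Rightarrow> nat \<Rightarrow> complex" where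
  "adj E \<phi> s t = (if E s t then \<phi> s t else 0)"

lemma unit_inverse: "cmod z = 1 \<Longrightarrow> inverse z = cnj z"
  using complex_div_cnj[of 1 z] by (simp add: inverse_eq_divide)

lemma herm_adj: assumes "simple_graph n E" "T_gain E \<phi>" shows "herm (adj E \<phi>)"
  unfolding herm_def
proof (intro allI)
  fix s t
  have sym: "E s t \<longleftrightarrow> E t s" using assms(1) unfolding simple_graph_def by blast
  show "cnj (adj E \<phi> s t) = adj E \<phi> t s"
  proof (cases "E s t")
    case True
    hence "cmod (\<phi> s t) = 1" "\<phi> t s = inverse (\<phi> s t)" using assms(2) unfolding T_gain_def by blast+
    thus ?thesis using True sym by (simp add: adj_def unit_inverse)
  next
    case False thus ?thesis using sym by (simp add: adj_def)
  qed
qed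

lemma adj_diag: assumes "simple_graph n E" shows "adj E \<phi> i i = 0"
proof -
  have "\<not> E i i" using assms unfolding simple_graph_def by blast
  thus ?thesis by (simp add: adj_def)
qed

lemma of_int_monom: "(of_int k :: complex poly) * monom c m = monom (of_int k * c) m"
  by (simp add: of_int_poly monom_altdef mult.commute)

definition W :: "nat \<Rightarrow> (nat \<Rightarrow> nat \<Rightarrow> complex) \<Rightarrow> (nat \<Rightarrow> nat) \<Rightarrow> complex poly" where
  "W n a p = monom (of_int (sign p) * (-1) ^ card (mv p) * cp a p) (n - card (mv p))"

lemma term_formula:
  assumes p: "p permutes {0..<n}" and d: "\<And>i. a i i = 0"
  shows "(\<Prod>i = 0..<n. char_poly_matrix (mat n n (\<lambda>(s, t). a s t)) $$ (i, p i))
     = monom ((-1) ^ card (mv p) * cp a p) (n - card (mv p))"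
proof -
  let ?M = "char_poly_matrix (mat n n (\<lambda>(s, t). a s t))"
  have pin: "i < n \<Longrightarrow> p i < n" for i using permutes_in_image[OF p] by simp
  have ent: "?M $$ (i, p i) = (if p i = i then [:0,1:] else [:- a i (p i):])" if "i < n" for i
    using that pin[OF that] d by (auto simp: char_poly_matrix_def)
  have mvs: "mv p \<subseteq> {0..<n}" using mv_sub[OF p] .
  have fin: "finite {0..<n}" by simp
  have "(\<Prod>i = 0..<n. ?M $$ (i, p i)) = (\<Prod>i \<in> {0..<n} - mv p. ?M $$ (i, p i)) * (\<Prod>i \<in> mv p. ?M $$ (i, p i))"
    using prod.subset_diff[OF mvs fin] by simp
  also have "(\<Prod>i \<in> {0..<n} - mv p. ?M $$ (i, p i)) = (\<Prod>i \<in> {0..<n} - mv p. [:0,1:])"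
  proof (rule prod.cong[OF refl])
    fix i assume "i \<in> {0..<n} - mv p"
    thus "?M $$ (i, p i) = [:0,1:]" using ent[of i] by (simp add: mv_def)
  qed
  also have "\<dots> = [:0,1:] ^ (n - card (mv p))"
    using card_Diff_subset[OF finite_subset[OF mvs fin] mvs] by simp
  also have "(\<Prod>i \<in> mv p. ?M $$ (i, p i)) = (\<Prod>i \<in> mv p. [:- a i (p i):])"
  proof (rule prod.cong[OF refl])
    fix i assume "i \<in> mv p"
    thus "?M $$ (i, p i) = [:- a i (p i):]" using ent[of i] mvs by (auto simp add: mv_def)
  qed
  also have "\<dots> = [:\<Prod>i \<in> mv p. - a i (p i):]" by (rule prod_to_poly)
  also have "(\<Prod>i \<in> mv p. - a i (p i)) = (-1) ^ card (mv p) * cp a p"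
    unfolding cp_def by (simp add: prod_uminus)
  finally show ?thesis by (simp add: monom_altdef)
qed

lemma char_poly_formula:
  assumes d: "\<And>i. a i i = 0"
  shows "char_poly (mat n n (\<lambda>(s, t). a s t)) = (\<Sum>p\<in>{p. p permutes {0..<n}}. W n a p)"
proof -
  have "char_poly (mat n n (\<lambda>(s, t). a s t)) = (\<Sum>p\<in>{p. p permutes {0..<n}}.
     signof p * (\<Prod>i = 0..<n. char_poly_matrix (mat n n (\<lambda>(s, t). a s t)) $$ (i, p i)))"
    unfolding char_poly_def by (rule det_def') (simp add: char_poly_matrix_def)
  also have "\<dots> = (\<Sum>p\<in>{p. p permutes {0..<n}}. W n a p)"
  proof (rule sum.cong[OF refl])
    fix p assume "p \<in> {p. p permutes {0..<n}}"
    hence p: "p permutes {0..<n}" by simp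
    show "signof p * (\<Prod>i = 0..<n. char_poly_matrix (mat n n (\<lambda>(s, t). a s t)) $$ (i, p i)) = W n a p"
      unfolding term_formula[OF p d] W_def of_int_monom by (simp add: mult.assoc)
  qed
  finally show ?thesis .
qed


lemma sum_T:
  fixes f :: "int \<Rightarrow> nat set \<Rightarrow> complex \<Rightarrow> 'b::comm_monoid_add"
  assumes S: "finite S" and h1: "herm a1" and h2: "herm a2"
    and Q: "\<And>p. p \<in> Q \<Longrightarrow> p permutes S" "\<And>p. p \<in> Q \<Longrightarrow> good a1 a2 p"
      "\<And>p. p \<in> Q \<Longrightarrow> Tp a1 a2 p \<in> Q"
  shows "(\<Sum>p\<in>Q. f (sign p) (mv p) (cp a2 p)) = (\<Sum>p\<in>Q. f (sign p) (mv p) (cp a1 p))"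
proof -
  have "(\<Sum>p\<in>Q. f (sign p) (mv p) (cp a1 p)) = (\<Sum>p\<in>Q. f (sign p) (mv p) (cp a2 p))"
  proof (rule sum.reindex_bij_witness[of Q "Tp a1 a2" "Tp a1 a2"])
    fix p assume p: "p \<in> Q"
    show "Tp a1 a2 (Tp a1 a2 p) = p" using Tp_Tp[OF S Q(1)[OF p] h1 h2] .
    show "Tp a1 a2 p \<in> Q" using Q(3)[OF p] .
    show "Tp a1 a2 (Tp a1 a2 p) = p" using Tp_Tp[OF S Q(1)[OF p] h1 h2] .
    show "Tp a1 a2 p \<in> Q" using Q(3)[OF p] .
    show "f (sign (Tp a1 a2 p)) (mv (Tp a1 a2 p)) (cp a2 (Tp a1 a2 p)) = f (sign p) (mv p) (cp a1 p)"
      using Tp_sign[OF S Q(1)[OF p] h1 h2] Tp_mv[OF S Q(1)[OF p] h1 h2]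
        Tp_cp[OF S Q(1)[OF p] h1 h2 Q(2)[OF p]] by simp
  qed
  thus ?thesis by simp
qed

lemma unit_re:
  assumes "cmod z = 1" "cmod w = 1" "Re z = Re w"
  shows "z = w \<or> z = cnj w"
proof -
  have "(Re z)\<^sup>2 + (Im z)\<^sup>2 = 1" "(Re w)\<^sup>2 + (Im w)\<^sup>2 = 1"
    using assms(1,2) unfolding cmod_def by auto
  hence "(Im z)\<^sup>2 = (Im w)\<^sup>2" using assms(3) by simp
  hence "Im z = Im w \<or> Im z = - Im w" by (simp add: power2_eq_iff)
  thus ?thesis using assms(3) by (auto simp: complex_eq_iff)
qed

definition ol :: "(nat \<Rightarrow> nat) \<Rightarrow> nat \<Rightarrow> nat list" where
  "ol p i = map (\<lambda>t. (p ^^ t) i) [0..<card (orbit p i)]"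

lemma orbit_list:
  assumes p: "permutation p"
  shows "orbit p i = (\<lambda>t. (p ^^ t) i) ` {0..<card (orbit p i)}"
    and "inj_on (\<lambda>t. (p ^^ t) i) {0..<card (orbit p i)}"
    and "(p ^^ card (orbit p i)) i = i"
proof -
  have s: "i \<in> orbit p i" using orb_self[OF p] .
  let ?d = "funpow_dist1 p i i"
  have o: "orbit p i = (\<lambda>n. (p ^^ n) i) ` {0..<?d}" using orbit_conv_funpow_dist1[OF s] .
  have inj: "inj_on (\<lambda>n. (p ^^ n) i) {0..<?d}" using inj_on_funpow_dist1[OF s] .
  have c: "card (orbit p i) = ?d" using o inj by (simp add: card_image)
  show "orbit p i = (\<lambda>t. (p ^^ t) i) ` {0..<card (orbit p i)}" using o c by simp
  show "inj_on (\<lambda>t. (p ^^ t) i) {0..<card (orbit p i)}" using inj c by simp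
  show "(p ^^ card (orbit p i)) i = i" using funpow_dist1_prop[OF s] c by simp
qed

lemma oprod_list:
  assumes p: "permutation p"
  shows "oprod a p i = (\<Prod>t<card (orbit p i). a ((p ^^ t) i) (p ((p ^^ t) i)))"
proof -
  have "oprod a p i = (\<Prod>j\<in>(\<lambda>t. (p ^^ t) i) ` {0..<card (orbit p i)}. a j (p j))"
    unfolding oprod_def using orbit_list(1)[OF p] by metis
  also have "\<dots> = (\<Prod>t\<in>{0..<card (orbit p i)}. a ((p ^^ t) i) (p ((p ^^ t) i)))"
    using prod.reindex[OF orbit_list(2)[OF p]] by simp
  finally show ?thesis by (simp add: atLeast0LessThan)
qed

lemma card_orbit_ge2:
  assumes p: "permutation p" and i: "i \<in> mv p"
  shows "card (orbit p i) \<ge> 2"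
proof -
  have f: "finite (orbit p i)" using orb_finite[OF p] .
  have "i \<in> orbit p i" "p i \<in> orbit p i" using orb_self[OF p] orb_step[OF orb_self[OF p]] by auto
  moreover have "p i \<noteq> i" using i by (simp add: mv_def)
  ultimately have "{i, p i} \<subseteq> orbit p i" "card {i, p i} = 2" by auto
  thus ?thesis using card_mono[OF f] by metis
qed

lemma orbit_in: assumes "p permutes {0..<(n::nat)}" "j \<in> orbit p i" "i < n" shows "j < n"
proof -
  have "orbit p i \<subseteq> {0..<n}" using permutes_orbit_subset[OF assms(1), of i] assms(3) by simp
  thus ?thesis using assms(2) by auto
qed

lemma ol_cycle:
  assumes pS: "p permutes {0..<n}" and i: "i < n"
    and ed: "\<And>j. j \<in> orbit p i \<Longrightarrow> E j (p j)" and c3: "card (orbit p i) \<ge> 3"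
  shows "is_cycle n E (ol p i)" "length (ol p i) = card (orbit p i)"
    "set (ol p i) = orbit p i"
    "cycle_gain \<phi> (ol p i) = oprod (adj E \<phi>) p i"
proof -
  have p: "permutation p" using permutes_imp_permutation[OF _ pS] by simp
  let ?m = "card (orbit p i)"
  note OL = orbit_list[OF p, of i]
  have len: "length (ol p i) = ?m" by (simp add: ol_def)
  show "length (ol p i) = ?m" by fact
  have nth: "t < ?m \<Longrightarrow> ol p i ! t = (p ^^ t) i" for t by (simp add: ol_def)
  have nxt: "t < ?m \<Longrightarrow> ol p i ! ((t + 1) mod ?m) = p ((p ^^ t) i)" for t
  proof -
    assume t: "t < ?m"
    show ?thesis
    proof (cases "t + 1 < ?m")
      case True thus ?thesis using nth by simp
    next
      case False
      hence "t + 1 = ?m" using t by simp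
      hence "(t + 1) mod ?m = 0" by simp
      moreover have "(p ^^ Suc t) i = i" using OL(3) \<open>t + 1 = ?m\<close> by simp
      hence "p ((p ^^ t) i) = i" by simp
      ultimately show ?thesis using nth[of 0] c3 by simp
    qed
  qed
  have inorb: "(p ^^ t) i \<in> orbit p i" for t
    using OL(1) orbit_altdef_permutation[OF p] by blast
  show set: "set (ol p i) = orbit p i" unfolding ol_def using OL(1) by simp
  show "is_cycle n E (ol p i)"
    unfolding is_cycle_def
  proof (intro conjI allI impI)
    show "3 \<le> length (ol p i)" using len c3 by simp
    show "distinct (ol p i)" unfolding ol_def using OL(2) by (simp add: distinct_map atLeast0LessThan)
    show "set (ol p i) \<subseteq> {0..<n}" using set orbit_in[OF pS _ i] by auto
    fix t assume "t < length (ol p i)"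
    thus "E (ol p i ! t) (ol p i ! ((t + 1) mod length (ol p i)))"
      using nth nxt len ed inorb by simp
  qed
  show "cycle_gain \<phi> (ol p i) = oprod (adj E \<phi>) p i"
    unfolding cycle_gain_def oprod_list[OF p] len
    using nth nxt ed inorb by (intro prod.cong) (auto simp: adj_def)
qed


lemma adj_unit: "T_gain E \<phi> \<Longrightarrow> E s t \<Longrightarrow> cmod (adj E \<phi> s t) = 1"
  unfolding T_gain_def adj_def by simp

lemma good_orbit:
  assumes pS: "p permutes {0..<n}" and sg: "simple_graph n E"
    and T1: "T_gain E \<phi>1" and T2: "T_gain E \<phi>2" and i: "i \<in> mv p"
    and cyc: "(\<And>j. j \<in> orbit p i \<Longrightarrow> E j (p j)) \<Longrightarrow> card (orbit p i) \<ge> 3 \<Longrightarrow>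
       Re (cycle_gain \<phi>1 (ol p i)) = Re (cycle_gain \<phi>2 (ol p i))"
  shows "oprod (adj E \<phi>2) p i = oprod (adj E \<phi>1) p i \<or> oprod (adj E \<phi>2) p i = cnj (oprod (adj E \<phi>1) p i)"
proof -
  have p: "permutation p" using permutes_imp_permutation[OF _ pS] by simp
  have fin: "finite (orbit p i)" using orb_finite[OF p] .
  have iS: "i < n" using mv_sub[OF pS] i by auto
  show ?thesis
  proof (cases "\<forall>j\<in>orbit p i. E j (p j)")
    case False
    then obtain j where j: "j \<in> orbit p i" "\<not> E j (p j)" by blast
    have "oprod (adj E \<phi>) p i = 0" for \<phi>
      unfolding oprod_def using fin j by (auto simp: prod_zero_iff adj_def intro!: bexI[of _ j])
    thus ?thesis by simp
  next
    case True
    have c2: "card (orbit p i) \<ge> 2" using card_orbit_ge2[OF p i] .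
    show ?thesis
    proof (cases "card (orbit p i) = 2")
      case c: True
      have pp: "p (p i) = i" using orbit_list(3)[OF p, of i] c by (simp add: numeral_2_eq_2)
      have e1: "E i (p i)" using True orb_self[OF p] by blast
      have e2: "E (p i) i" using sg e1 unfolding simple_graph_def by blast
      have one: "oprod (adj E \<phi>) p i = 1" if T: "T_gain E \<phi>" for \<phi>
      proof -
        have "cmod (\<phi> i (p i)) = 1" "\<phi> (p i) i = inverse (\<phi> i (p i))" using T e1 unfolding T_gain_def by blast+
        hence nz: "\<phi> i (p i) \<noteq> 0" by auto
        have "oprod (adj E \<phi>) p i = adj E \<phi> i (p i) * adj E \<phi> (p i) (p (p i))"
          unfolding oprod_list[OF p] c by (simp add: numeral_2_eq_2)
        also have "\<dots> = \<phi> i (p i) * inverse (\<phi> i (p i))"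
          using pp e1 e2 \<open>\<phi> (p i) i = inverse (\<phi> i (p i))\<close> by (simp add: adj_def)
        also have "\<dots> = 1" using nz by simp
        finally show ?thesis .
      qed
      show ?thesis using one[OF T1] one[OF T2] by simp
    next
      case False
      hence c3: "card (orbit p i) \<ge> 3" using c2 by simp
      have ed: "\<And>j. j \<in> orbit p i \<Longrightarrow> E j (p j)" using True by blast
      have g: "cycle_gain \<phi> (ol p i) = oprod (adj E \<phi>) p i" for \<phi>
        using ol_cycle(4)[where E=E, OF pS iS ed c3] .
      have u: "cmod (oprod (adj E \<phi>) p i) = 1" if T: "T_gain E \<phi>" for \<phi>
      proof -
        have "cmod (oprod (adj E \<phi>) p i) = (\<Prod>j\<in>orbit p i. cmod (adj E \<phi> j (p j)))"
          unfolding oprod_def by (simp add: prod_norm)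
        also have "\<dots> = 1" using adj_unit[OF T] ed by simp
        finally show ?thesis .
      qed
      have "Re (oprod (adj E \<phi>2) p i) = Re (oprod (adj E \<phi>1) p i)"
        using cyc[OF ed c3] g by simp
      thus ?thesis using unit_re[OF u[OF T2] u[OF T1]] by simp
    qed
  qed
qed

lemma gain_adj_eq: "gain_adj n E \<phi> = mat n n (\<lambda>(s, t). adj E \<phi> s t)"
  unfolding gain_adj_def adj_def by simp

lemma W_alt: "W n a p = (\<lambda>s M c. monom (of_int s * (-1) ^ card M * c) (n - card M)) (sign p) (mv p) (cp a p)"
  unfolding W_def by simp

lemma dir_back:
  assumes sg: "simple_graph n E" and T1: "T_gain E \<phi>1" and T2: "T_gain E \<phi>2"
    and re: "\<forall>C. is_cycle n E C \<longrightarrow> Re (cycle_gain \<phi>1 C) = Re (cycle_gain \<phi>2 C)"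
  shows "char_poly (gain_adj n E \<phi>1) = char_poly (gain_adj n E \<phi>2)"
proof -
  let ?P = "{p. p permutes {0..<n}}"
  let ?f = "\<lambda>s M c. monom (of_int s * (-1) ^ card M * c) (n - card M)"
  have h1: "herm (adj E \<phi>1)" using herm_adj[OF sg T1] .
  have h2: "herm (adj E \<phi>2)" using herm_adj[OF sg T2] .
  have "(\<Sum>p\<in>?P. ?f (sign p) (mv p) (cp (adj E \<phi>2) p)) = (\<Sum>p\<in>?P. ?f (sign p) (mv p) (cp (adj E \<phi>1) p))"
  proof (rule sum_T[OF _ h1 h2])
    show "finite {0..<n}" by simp
    fix p assume "p \<in> ?P"
    hence pS: "p permutes {0..<n}" by simp
    show "p permutes {0..<n}" by fact
    show "Tp (adj E \<phi>1) (adj E \<phi>2) p \<in> ?P" using Tp_perm[OF _ pS h1 h2] by simp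
    show "good (adj E \<phi>1) (adj E \<phi>2) p"
      unfolding good_def
    proof
      fix i assume i: "i \<in> mv p"
      have iS: "i < n" using mv_sub[OF pS] i by auto
      show "oprod (adj E \<phi>2) p i = oprod (adj E \<phi>1) p i \<or> oprod (adj E \<phi>2) p i = cnj (oprod (adj E \<phi>1) p i)"
        by (rule good_orbit[OF pS sg T1 T2 i]) (use re ol_cycle(1)[OF pS iS] in blast)
    qed
  qed
  thus ?thesis unfolding gain_adj_eq
    by (simp add: char_poly_formula[OF adj_diag[OF sg]] W_def)
qed


definition cperm :: "nat list \<Rightarrow> nat \<Rightarrow> nat" where
  "cperm C v = (if v \<in> set C then C ! (((THE t. t < length C \<and> C ! t = v) + 1) mod length C) else v)"

context
  fixes C :: "nat list"
  assumes dC: "distinct C" and lC: "length C \<ge> 3"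
begin

lemma posC: "0 < length C" using lC by linarith

lemma idx: "t < length C \<Longrightarrow> (THE s. s < length C \<and> C ! s = C ! t) = t"
  by (rule the_equality) (use dC nth_eq_iff_index_eq in auto)

lemma cperm_nth: "t < length C \<Longrightarrow> cperm C (C ! t) = C ! ((t + 1) mod length C)"
  unfolding cperm_def using idx by simp

lemma cperm_out: "v \<notin> set C \<Longrightarrow> cperm C v = v"
  unfolding cperm_def by simp

lemma setC: "v \<in> set C \<Longrightarrow> \<exists>t < length C. v = C ! t"
  by (metis in_set_conv_nth)

lemma cperm_in: "v \<in> set C \<Longrightarrow> cperm C v \<in> set C"
  using setC cperm_nth by (metis length_pos_if_in_set mod_less_divisor nth_mem)

lemma cperm_surj: "v \<in> set C \<Longrightarrow> v \<in> cperm C ` set C"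
proof -
  assume "v \<in> set C"
  then obtain s where s: "s < length C" "v = C ! s" using setC by blast
  show ?thesis
  proof (cases s)
    case 0
    let ?t = "length C - 1"
    have "?t < length C" "?t + 1 = length C" using lC by auto
    hence "?t < length C" "(?t + 1) mod length C = 0" by auto
    thus ?thesis using cperm_nth[of ?t] s 0 by (metis image_eqI nth_mem)
  next
    case (Suc r)
    have "r < length C" "(r + 1) mod length C = s" using s Suc by auto
    thus ?thesis using cperm_nth[of r] s by (metis image_eqI nth_mem)
  qed
qed

lemma cperm_img: "cperm C ` set C = set C"
  using cperm_in cperm_surj by blast

lemma cperm_perm: "cperm C permutes set C"
proof (rule bij_imp_permutes)
  have "inj_on (cperm C) (set C)"
    by (rule eq_card_imp_inj_on) (simp_all add: cperm_img)
  thus "bij_betw (cperm C) (set C) (set C)" using cperm_img by (simp add: bij_betw_def)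
qed (rule cperm_out)

lemma cperm_mv: "mv (cperm C) = set C"
proof
  show "mv (cperm C) \<subseteq> set C" using cperm_out by (auto simp: mv_def)
  show "set C \<subseteq> mv (cperm C)"
  proof
    fix v assume "v \<in> set C"
    then obtain t where t: "t < length C" "v = C ! t" using setC by blast
    have "(t + 1) mod length C \<noteq> t"
    proof (cases "t + 1 < length C")
      case True thus ?thesis by simp
    next
      case False
      hence "t + 1 = length C" using t(1) by simp
      thus ?thesis using lC by simp
    qed
    moreover have "(t + 1) mod length C < length C" using posC by simp
    ultimately have "C ! ((t + 1) mod length C) \<noteq> C ! t" using nth_eq_iff_index_eq[OF dC _ t(1)] by blast
    thus "v \<in> mv (cperm C)" using t cperm_nth by (simp add: mv_def)
  qed
qed

lemma cperm_pow: "(cperm C ^^ t) (C ! 0) = C ! (t mod length C)"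
proof (induction t)
  case 0 thus ?case by simp
next
  case (Suc t)
  have "t mod length C < length C" using posC by simp
  hence "(cperm C ^^ Suc t) (C ! 0) = C ! ((t mod length C + 1) mod length C)"
    using Suc cperm_nth by simp
  also have "(t mod length C + 1) mod length C = Suc t mod length C" by (simp add: mod_Suc_eq)
  finally show ?case .
qed

lemma cperm_permutation: "permutation (cperm C)"
  using permutes_imp_permutation[OF _ cperm_perm] by simp

lemma cperm_orbit: "orbit (cperm C) (C ! 0) = set C"
proof -
  have "orbit (cperm C) (C ! 0) = {C ! (t mod length C) | t. True}"
    unfolding orbit_altdef_permutation[OF cperm_permutation] cperm_pow by simp
  also have "\<dots> = set C"
  proof
    show "{C ! (t mod length C) | t. True} \<subseteq> set C" using posC by auto
    show "set C \<subseteq> {C ! (t mod length C) | t. True}"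
    proof
      fix v assume "v \<in> set C"
      then obtain t where "t < length C" "v = C ! t" using setC by blast
      thus "v \<in> {C ! (t mod length C) | t. True}" by (metis (mono_tags, lifting) mem_Collect_eq mod_less)
    qed
  qed
  finally show ?thesis .
qed

lemma cperm_cp: "cp a (cperm C) = (\<Prod>t<length C. a (C ! t) (C ! ((t + 1) mod length C)))"
proof -
  have "cp a (cperm C) = (\<Prod>v\<in>set C. a v (cperm C v))" unfolding cp_def cperm_mv ..
  also have "set C = (\<lambda>t. C ! t) ` {..<length C}" by (auto simp: set_conv_nth)
  also have "(\<Prod>v\<in>(\<lambda>t. C ! t) ` {..<length C}. a v (cperm C v)) = (\<Prod>t<length C. a (C ! t) (cperm C (C ! t)))"
    using prod.reindex[OF inj_on_nth[OF dC, of "{..<length C}"]] by simp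
  also have "\<dots> = (\<Prod>t<length C. a (C ! t) (C ! ((t + 1) mod length C)))"
    using cperm_nth by simp
  finally show ?thesis .
qed

lemma cperm_neq_inv: "cperm C \<noteq> pinv (cperm C)"
proof
  assume eq: "cperm C = pinv (cperm C)"
  have "cperm C (cperm C (C ! 0)) = cperm C (pinv (cperm C) (C ! 0))"
    by (subst eq[symmetric]) (rule refl)
  also have "\<dots> = C ! 0" by (rule permutes_inverses(1)[OF cperm_perm])
  finally have "cperm C (cperm C (C ! 0)) = C ! 0" .
  moreover have "cperm C (cperm C (C ! 0)) = C ! 2"
    using cperm_pow[of 2] lC by (simp add: numeral_2_eq_2)
  moreover have "C ! 2 \<noteq> C ! 0" using nth_eq_iff_index_eq[OF dC, of 2 0] lC posC by simp
  ultimately show False by simp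
qed

end

lemma cp_inv:
  assumes p: "permutation p" and h: "herm a"
  shows "cp a (pinv p) = cnj (cp a p)"
proof -
  have b: "bij p" using permutation_bijective[OF p] .
  have i1: "p (pinv p x) = x" for x using b by (simp add: surj_f_inv_f bij_is_surj)
  have i2: "pinv p (p x) = x" for x using b by (simp add: inv_f_f bij_is_inj)
  have mvi: "mv (pinv p) = mv p"
  proof -
    have "pinv p x = x \<longleftrightarrow> p x = x" for x using i1[of x] i2[of x] by metis
    thus ?thesis unfolding mv_def by simp
  qed
  have bb: "bij_betw p (mv p) (mv p)"
  proof (rule bij_inv_set[OF p])
    fix j assume "j \<in> mv p"
    hence "p j \<noteq> j" by (simp add: mv_def)
    show "p j \<in> mv p"
    proof (rule ccontr)
      assume "p j \<notin> mv p"
      hence "p (p j) = p j" by (simp add: mv_def)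
      hence "pinv p (p (p j)) = pinv p (p j)" by simp
      hence "p j = j" by (simp only: i2)
      thus False using \<open>p j \<noteq> j\<close> by simp
    qed
    show "pinv p j \<in> mv p"
    proof (rule ccontr)
      assume "pinv p j \<notin> mv p"
      hence "p (pinv p j) = pinv p j" by (simp add: mv_def)
      hence "j = pinv p j" by (simp only: i1)
      hence "p j = p (pinv p j)" by simp
      hence "p j = j" by (simp only: i1)
      thus False using \<open>p j \<noteq> j\<close> by simp
    qed
  qed
  have "cp a (pinv p) = (\<Prod>j\<in>mv p. a j (pinv p j))" unfolding cp_def mvi ..
  also have "\<dots> = (\<Prod>j\<in>mv p. a (p j) (pinv p (p j)))"
    using prod.reindex_bij_betw[OF bb, of "\<lambda>j. a j (pinv p j)"] by simp
  also have "\<dots> = (\<Prod>j\<in>mv p. cnj (a j (p j)))" using i2 h by (simp add: herm_def)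
  also have "\<dots> = cnj (cp a p)" by (simp add: cp_def)
  finally show ?thesis .
qed


lemma mv_inv:
  assumes p: "permutation p" shows "mv (pinv p) = mv p"
proof -
  have b: "bij p" using permutation_bijective[OF p] .
  have i1: "p (pinv p x) = x" for x using b by (simp add: surj_f_inv_f bij_is_surj)
  have i2: "pinv p (p x) = x" for x using b by (simp add: inv_f_f bij_is_inj)
  have "pinv p x = x \<longleftrightarrow> p x = x" for x using i1[of x] i2[of x] by metis
  thus ?thesis unfolding mv_def by simp
qed

lemma UCE:
  assumes "is_cycle n E X" shows "\<Union>(cycle_edges X) = set X"
proof
  have pos: "0 < length X" using assms unfolding is_cycle_def by linarith
  show "\<Union>(cycle_edges X) \<subseteq> set X"
    unfolding cycle_edges_def using pos by (auto intro!: nth_mem)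
  show "set X \<subseteq> \<Union>(cycle_edges X)"
  proof
    fix v assume "v \<in> set X"
    then obtain t where t: "t < length X" "v = X ! t" by (metis in_set_conv_nth)
    hence "{X ! t, X ! ((t + 1) mod length X)} \<in> cycle_edges X" unfolding cycle_edges_def by blast
    thus "v \<in> \<Union>(cycle_edges X)" using t by blast
  qed
qed

lemma ol_facts:
  assumes p: "permutation p" and t: "t < card (orbit p i)"
  shows "ol p i ! t = (p ^^ t) i" "ol p i ! ((t + 1) mod card (orbit p i)) = p ((p ^^ t) i)"
    "length (ol p i) = card (orbit p i)"
proof -
  let ?m = "card (orbit p i)"
  note OL = orbit_list[OF p, of i]
  have nth: "s < ?m \<Longrightarrow> ol p i ! s = (p ^^ s) i" for s by (simp add: ol_def)
  show "ol p i ! t = (p ^^ t) i" using nth[OF t] .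
  show "length (ol p i) = ?m" by (simp add: ol_def)
  show "ol p i ! ((t + 1) mod ?m) = p ((p ^^ t) i)"
  proof (cases "t + 1 < ?m")
    case True thus ?thesis using nth by simp
  next
    case False
    hence e: "t + 1 = ?m" using t by simp
    hence "(t + 1) mod ?m = 0" by simp
    moreover have "(p ^^ Suc t) i = i" using OL(3) e by simp
    hence "p ((p ^^ t) i) = i" by simp
    ultimately show ?thesis using nth[of 0] t by simp
  qed
qed

lemma edge_L:
  assumes p: "permutation p" and v: "v \<in> orbit p i"
  shows "{v, p v} \<in> cycle_edges (ol p i)"
proof -
  note OL = orbit_list[OF p, of i]
  have "v \<in> (\<lambda>t. (p ^^ t) i) ` {0..<card (orbit p i)}" using v OL(1) by simp
  then obtain t where t: "t < card (orbit p i)" "v = (p ^^ t) i" by auto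
  note F = ol_facts[OF p t(1)]
  have "{ol p i ! t, ol p i ! ((t + 1) mod length (ol p i))} \<in> cycle_edges (ol p i)"
    unfolding cycle_edges_def using t(1) F(3) by auto
  thus ?thesis using F t by simp
qed

lemma edge_C:
  assumes C: "is_cycle n E C" and e: "e \<in> cycle_edges C"
  shows "\<exists>u\<in>set C. e = {u, cperm C u}"
proof -
  have dC: "distinct C" and lC: "length C \<ge> 3" using C unfolding is_cycle_def by auto
  obtain t where t: "t < length C" "e = {C ! t, C ! ((t + 1) mod length C)}"
    using e unfolding cycle_edges_def by blast
  thus ?thesis using cperm_nth[OF dC lC t(1)] nth_mem[OF t(1)] by (intro bexI[of _ "C ! t"]) simp_all
qed

lemma follow:
  assumes g: "permutation g" and x0: "x0 \<in> orbit g x0"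
    and hg: "\<And>v. v \<in> orbit g x0 \<Longrightarrow> h (g v) = v"
    and alt: "\<And>v. v \<in> orbit g x0 \<Longrightarrow> p v = g v \<or> p v = h v"
    and npp: "\<And>v. v \<in> orbit g x0 \<Longrightarrow> p (p v) \<noteq> v"
    and st: "p x0 = g x0"
  shows "\<And>v. v \<in> orbit g x0 \<Longrightarrow> p v = g v"
proof -
  have inO: "(g ^^ t) x0 \<in> orbit g x0" for t using orbit_altdef_permutation[OF g] by blast
  have "p ((g ^^ t) x0) = g ((g ^^ t) x0)" for t
  proof (induction t)
    case 0 thus ?case using st by simp
  next
    case (Suc t)
    let ?w = "(g ^^ t) x0"
    have w': "(g ^^ Suc t) x0 = g ?w" by simp
    have "p (g ?w) = g (g ?w) \<or> p (g ?w) = h (g ?w)" using alt inO[of "Suc t"] w' by metis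
    moreover have "h (g ?w) = ?w" using hg inO by blast
    moreover have "p (p ?w) \<noteq> ?w" using npp inO by blast
    ultimately have "p (g ?w) = g (g ?w)" using Suc.IH by auto
    thus ?case using w' by simp
  qed
  thus "\<And>v. v \<in> orbit g x0 \<Longrightarrow> p v = g v" using orbit_altdef_permutation[OF g] by auto
qed

lemma orbit2:
  assumes p: "permutation p" and pp: "p (p v) = v"
  shows "card (orbit p v) \<le> 2"
proof -
  have "(p ^^ 2) v = v" using pp by (simp add: numeral_2_eq_2)
  hence "orbit p v = {(p ^^ m) v | m. m < 2}" using orbit_altdef_bounded[where f=p and n=2 and s=v] by simp
  also have "\<dots> \<subseteq> {v, p v}"
  proof
    fix x assume "x \<in> {(p ^^ m) v | m. m < 2}"
    then obtain m where "m < 2" "x = (p ^^ m) v" by blast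
    thus "x \<in> {v, p v}" by (cases m) (auto simp: numeral_2_eq_2 less_Suc_eq)
  qed
  finally have "card (orbit p v) \<le> card {v, p v}" by (simp add: card_mono)
  also have "\<dots> \<le> 2" by (simp add: card_insert_if)
  finally show ?thesis .
qed

lemma sym_E: "simple_graph n E \<Longrightarrow> E x y \<Longrightarrow> E y x"
  unfolding simple_graph_def by blast

lemma bridge3:
  assumes D: "in_D n E" and C: "is_cycle n E C" and k: "length C = k"
    and pS: "p permutes {0..<n}" and mk: "card (mv p) = k"
    and ed: "\<And>j. j \<in> mv p \<Longrightarrow> E j (p j)" and i: "i \<in> mv p" and ok: "card (orbit p i) = k"
  shows "p = cperm C \<or> p = pinv (cperm C)"
proof -
  have pp: "permutation p" using permutes_imp_permutation[OF _ pS] by simp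
  have fm: "finite (mv p)" using mv_finite[OF pp] .
  have dC: "distinct C" and lC: "length C \<ge> 3" using C unfolding is_cycle_def by auto
  have osub: "orbit p i \<subseteq> mv p" using orb_mv[OF pp i] by blast
  have om: "orbit p i = mv p"
    using card_subset_eq[OF fm osub] ok mk by simp
  have iS: "i < n" using mv_sub[OF pS] i by auto
  have edo: "\<And>j. j \<in> orbit p i \<Longrightarrow> E j (p j)" using ed om by blast
  have c3: "card (orbit p i) \<ge> 3" using ok k lC by simp
  note OC = ol_cycle[where E=E, OF pS iS edo c3]
  have allD: "\<forall>xs ys. is_cycle n E xs \<and> is_cycle n E ys \<and> length xs = length ys
        \<longrightarrow> cycle_edges xs = cycle_edges ys" using D unfolding in_D_def by blast
  have "length (ol p i) = length C" using OC(2) ok k by simp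
  hence ce: "cycle_edges (ol p i) = cycle_edges C"
    using allD OC(1) C by blast
  have sC: "set C = mv p" using UCE[OF OC(1)] UCE[OF C] ce OC(3) om by simp
  let ?s = "cperm C"
  have sperm: "?s permutes set C" using cperm_perm[OF dC lC] .
  have alt: "p v = ?s v \<or> p v = pinv ?s v" if v: "v \<in> set C" for v
  proof -
    have "v \<in> orbit p i" using v sC om by simp
    hence "{v, p v} \<in> cycle_edges C" using edge_L[OF pp, of v i] ce by simp
    then obtain u where u: "u \<in> set C" "{v, p v} = {u, ?s u}" using edge_C[OF C] by blast
    hence "(v = u \<and> p v = ?s u) \<or> (v = ?s u \<and> p v = u)" by (simp add: doubleton_eq_iff)
    thus ?thesis using permutes_inverses(2)[OF sperm, of u] by auto
  qed
  have npp: "p (p v) \<noteq> v" if v: "v \<in> set C" for v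
  proof
    assume "p (p v) = v"
    hence "card (orbit p v) \<le> 2" using orbit2[OF pp] by blast
    moreover have "orbit p v = orbit p i" using orb_same[OF pp, of v i] v sC om by simp
    ultimately show False using c3 by simp
  qed
  have pos: "0 < length C" using lC by linarith
  let ?x = "C ! 0"
  have x0: "?x \<in> set C" using pos by simp
  have so: "orbit ?s ?x = set C" using cperm_orbit[OF dC lC] .
  have sp: "permutation ?s" using cperm_permutation[OF dC lC] .
  have out: "p v = v" if "v \<notin> set C" for v using that sC by (simp add: mv_def)
  show ?thesis
  proof (cases "p ?x = ?s ?x")
    case True
    have a1: "?x \<in> orbit ?s ?x" using so x0 by simp
    have a2: "\<And>v. v \<in> orbit ?s ?x \<Longrightarrow> pinv ?s (?s v) = v" using permutes_inverses(2)[OF sperm] by blast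
    have a3: "\<And>v. v \<in> orbit ?s ?x \<Longrightarrow> p v = ?s v \<or> p v = pinv ?s v" using alt so by blast
    have a4: "\<And>v. v \<in> orbit ?s ?x \<Longrightarrow> p (p v) \<noteq> v" using npp so by blast
    have "\<And>v. v \<in> orbit ?s ?x \<Longrightarrow> p v = ?s v" by (rule follow[OF sp a1 a2 a3 a4 True])
    hence "p v = ?s v" for v using so out cperm_out[OF dC lC, of v] by (cases "v \<in> set C") auto
    thus ?thesis by auto
  next
    case False
    hence st: "p ?x = pinv ?s ?x" using alt[OF x0] by auto
    have spi: "permutation (pinv ?s)" using permutation_inverse[OF sp] .
    have soi: "orbit (pinv ?s) ?x = set C" using orbit_inv_eq[OF sp] so by simp
    have b1: "?x \<in> orbit (pinv ?s) ?x" using soi x0 by simp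
    have b2: "\<And>v. v \<in> orbit (pinv ?s) ?x \<Longrightarrow> ?s (pinv ?s v) = v" using permutes_inverses(1)[OF sperm] by blast
    have b3: "\<And>v. v \<in> orbit (pinv ?s) ?x \<Longrightarrow> p v = pinv ?s v \<or> p v = ?s v" using alt soi by blast
    have b4: "\<And>v. v \<in> orbit (pinv ?s) ?x \<Longrightarrow> p (p v) \<noteq> v" using npp soi by blast
    have "\<And>v. v \<in> orbit (pinv ?s) ?x \<Longrightarrow> p v = pinv ?s v" by (rule follow[OF spi b1 b2 b3 b4 st])
    moreover have "v \<notin> set C \<Longrightarrow> pinv ?s v = v" for v
      using permutes_not_in[OF permutes_inv[OF sperm]] by blast
    ultimately have "p v = pinv ?s v" for v using soi out by (cases "v \<in> set C") auto
    thus ?thesis by auto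
  qed
qed

definition Qd :: "(nat \<Rightarrow> nat \<Rightarrow> bool) \<Rightarrow> nat \<Rightarrow> (nat \<Rightarrow> nat) \<Rightarrow> bool" where
  "Qd E k p \<longleftrightarrow> (\<forall>j\<in>mv p. E j (p j)) \<and> (\<exists>i\<in>mv p. card (orbit p i) = k)"

lemma Qd_T:
  assumes S: "finite S" and qS: "q permutes S" and h1: "herm a1" and h2: "herm a2"
    and sg: "simple_graph n E" and Q: "Qd E k q"
  shows "Qd E k (Tp a1 a2 q)"
  unfolding Qd_def Tp_mv[OF S qS h1 h2] Tp_orbit[OF S qS h1 h2]
proof (intro conjI ballI)
  show "\<exists>i\<in>mv q. card (orbit q i) = k" using Q unfolding Qd_def by blast
  fix j assume j: "j \<in> mv q"
  show "E j (Tp a1 a2 q j)"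
  proof (cases "j \<in> Uset a1 a2 q")
    case True
    let ?l = "pinv q j"
    have l: "?l \<in> mv q" using U_i1[OF S qS h1 h2 True] U_mv[OF S qS h1 h2] by blast
    have "E ?l (q ?l)" using Q l unfolding Qd_def by blast
    hence "E ?l j" using pinv1[OF S qS h1 h2] by simp
    thus ?thesis using Tp_U[OF S qS h1 h2 True] sym_E[OF sg] by simp
  next
    case False
    thus ?thesis using Tp_nU[OF S qS h1 h2 False] Q j unfolding Qd_def by simp
  qed
qed

lemma coeff_char:
  assumes sg: "simple_graph n E" and k: "k \<le> n"
  shows "coeff (char_poly (gain_adj n E \<phi>)) (n - k) =
    (-1) ^ k * (\<Sum>p\<in>{p \<in> {p. p permutes {0..<n}}. card (mv p) = k}. of_int (sign p) * cp (adj E \<phi>) p)"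
proof -
  let ?P = "{p. p permutes {0..<n}}"
  have fP: "finite ?P" by (rule finite_permutations) simp
  have "coeff (char_poly (gain_adj n E \<phi>)) (n - k) = (\<Sum>p\<in>?P. coeff (W n (adj E \<phi>) p) (n - k))"
    unfolding gain_adj_eq char_poly_formula[OF adj_diag[OF sg]] by (simp add: coeff_sum)
  also have "\<dots> = (\<Sum>p\<in>?P. if card (mv p) = k then (-1) ^ k * (of_int (sign p) * cp (adj E \<phi>) p) else 0)"
  proof (rule sum.cong[OF refl])
    fix p assume "p \<in> ?P"
    hence "mv p \<subseteq> {0..<n}" using mv_sub by blast
    hence "card (mv p) \<le> n" using card_mono[of "{0..<n}" "mv p"] by simp
    hence "(n - card (mv p) = n - k) \<longleftrightarrow> card (mv p) = k" using k by auto
    thus "coeff (W n (adj E \<phi>) p) (n - k) = (if card (mv p) = k then (-1) ^ k * (of_int (sign p) * cp (adj E \<phi>) p) else 0)"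
      unfolding W_def by (auto simp: mult_ac)
  qed
  also have "\<dots> = (\<Sum>p\<in>{p \<in> ?P. card (mv p) = k}. (-1) ^ k * (of_int (sign p) * cp (adj E \<phi>) p))"
    by (rule sum.inter_filter[OF fP, symmetric])
  also have "\<dots> = (-1) ^ k * (\<Sum>p\<in>{p \<in> ?P. card (mv p) = k}. of_int (sign p) * cp (adj E \<phi>) p)"
    by (simp add: sum_distrib_left)
  finally show ?thesis .
qed


lemma cycle_cp:
  assumes C: "is_cycle n E C"
  shows "cp (adj E \<phi>) (cperm C) = cycle_gain \<phi> C"
proof -
  have dC: "distinct C" and lC: "length C \<ge> 3" using C unfolding is_cycle_def by auto
  have ed: "\<And>t. t < length C \<Longrightarrow> E (C ! t) (C ! ((t + 1) mod length C))"
    using C unfolding is_cycle_def by blast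
  show ?thesis unfolding cperm_cp[OF dC lC] cycle_gain_def
    using ed by (intro prod.cong) (auto simp: adj_def)
qed

lemma dir_fwd:
  assumes D: "in_D n E" and T1: "T_gain E \<phi>1" and T2: "T_gain E \<phi>2"
    and eqc: "char_poly (gain_adj n E \<phi>1) = char_poly (gain_adj n E \<phi>2)"
  shows "\<forall>C. is_cycle n E C \<longrightarrow> Re (cycle_gain \<phi>1 C) = Re (cycle_gain \<phi>2 C)"
proof -
  have sg: "simple_graph n E" using D unfolding in_D_def connected_graph_def by blast
  let ?a1 = "adj E \<phi>1" and ?a2 = "adj E \<phi>2"
  have h1: "herm ?a1" using herm_adj[OF sg T1] .
  have h2: "herm ?a2" using herm_adj[OF sg T2] .
  let ?P = "{p. p permutes {0..<n}}"
  have fP: "finite ?P" by (rule finite_permutations) simp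
  have main: "\<forall>C. is_cycle n E C \<and> length C = m \<longrightarrow> Re (cycle_gain \<phi>1 C) = Re (cycle_gain \<phi>2 C)" for m
  proof (induction m rule: less_induct)
    case (less k)
    show ?case
    proof (intro allI impI)
      fix C assume Ck: "is_cycle n E C \<and> length C = k"
      hence C: "is_cycle n E C" and k: "length C = k" by auto
      have dC: "distinct C" and lC: "length C \<ge> 3" and sC: "set C \<subseteq> {0..<n}"
        using C unfolding is_cycle_def by auto
      have kn: "k \<le> n" using card_mono[OF _ sC] distinct_card[OF dC] k by simp
      define Pk where "Pk = {p \<in> ?P. card (mv p) = k}"
      define S1 where "S1 = {p \<in> Pk. \<not> Qd E k p}"
      define S2 where "S2 = {p \<in> Pk. Qd E k p}"
      let ?s = "cperm C"
      let ?f = "\<lambda>a p. of_int (sign p) * cp a p"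
      have fPk: "finite Pk" using fP unfolding Pk_def by simp
      have "(-1) ^ k * (\<Sum>p\<in>Pk. ?f ?a1 p) = (-1) ^ k * (\<Sum>p\<in>Pk. ?f ?a2 p)"
        using coeff_char[OF sg kn, of \<phi>1] coeff_char[OF sg kn, of \<phi>2] eqc unfolding Pk_def by simp
      hence ceq: "(\<Sum>p\<in>Pk. ?f ?a1 p) = (\<Sum>p\<in>Pk. ?f ?a2 p)" by simp
      have s1: "(\<Sum>p\<in>S1. (\<lambda>s M c. of_int s * c) (sign p) (mv p) (cp ?a2 p)) =
                (\<Sum>p\<in>S1. (\<lambda>s M c. of_int s * c) (sign p) (mv p) (cp ?a1 p))"
      proof (rule sum_T[OF _ h1 h2])
        show "finite {0..<n}" by simp
        fix p assume p: "p \<in> S1"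
        hence pS: "p permutes {0..<n}" and mk: "card (mv p) = k" and nQ: "\<not> Qd E k p" unfolding S1_def Pk_def by auto
        show "p permutes {0..<n}" by fact
        have pp: "permutation p" using permutes_imp_permutation[OF _ pS] by simp
        show "good ?a1 ?a2 p"
          unfolding good_def
        proof
          fix i assume i: "i \<in> mv p"
          have iS: "i < n" using mv_sub[OF pS] i by auto
          show "oprod ?a2 p i = oprod ?a1 p i \<or> oprod ?a2 p i = cnj (oprod ?a1 p i)"
          proof (rule good_orbit[OF pS sg T1 T2 i])
            assume ed: "\<And>j. j \<in> orbit p i \<Longrightarrow> E j (p j)" and c3: "card (orbit p i) \<ge> 3"
            note OC = ol_cycle[where E=E, OF pS iS ed c3]
            have osub: "orbit p i \<subseteq> mv p" using orb_mv[OF pp i] by blast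
            have fm: "finite (mv p)" using mv_finite[OF pp] .
            have le: "card (orbit p i) \<le> k" using card_mono[OF fm osub] mk by simp
            have "card (orbit p i) \<noteq> k"
            proof
              assume ck: "card (orbit p i) = k"
              hence "orbit p i = mv p" using card_subset_eq[OF fm osub] mk by simp
              hence "Qd E k p" unfolding Qd_def using ed i ck by blast
              thus False using nQ by simp
            qed
            hence lt: "length (ol p i) < k" using le OC(2) by simp
            thus "Re (cycle_gain \<phi>1 (ol p i)) = Re (cycle_gain \<phi>2 (ol p i))"
              using less.IH[OF lt] OC(1) by blast
          qed
        qed
        have TS: "Tp ?a1 ?a2 p permutes {0..<n}" using Tp_perm[OF _ pS h1 h2] by simp
        have "\<not> Qd E k (Tp ?a1 ?a2 p)"
        proof
          assume "Qd E k (Tp ?a1 ?a2 p)"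
          hence "Qd E k (Tp ?a1 ?a2 (Tp ?a1 ?a2 p))" using Qd_T[OF _ TS h1 h2 sg] by simp
          thus False using Tp_Tp[OF _ pS h1 h2] nQ by simp
        qed
        thus "Tp ?a1 ?a2 p \<in> S1" using TS Tp_mv[OF _ pS h1 h2] mk unfolding S1_def Pk_def by simp
      qed
      have sp: "?s permutes set C" using cperm_perm[OF dC lC] .
      have spn: "?s permutes {0..<n}" using permutes_subset[OF sp sC] .
      have sperm: "permutation ?s" using cperm_permutation[OF dC lC] .
      have smv: "mv ?s = set C" using cperm_mv[OF dC lC] .
      have cardC: "card (set C) = k" using distinct_card[OF dC] k by simp
      have pos: "0 < length C" using lC by linarith
      have x0: "C ! 0 \<in> set C" using pos by simp
      have sed: "\<And>j. j \<in> mv ?s \<Longrightarrow> E j (?s j)"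
      proof -
        fix j assume "j \<in> mv ?s"
        then obtain t where t: "t < length C" "j = C ! t" using smv by (metis in_set_conv_nth)
        thus "E j (?s j)" using C cperm_nth[OF dC lC t(1)] unfolding is_cycle_def by auto
      qed
      have sQ: "Qd E k ?s" unfolding Qd_def
      proof (intro conjI ballI)
        show "\<And>j. j \<in> mv ?s \<Longrightarrow> E j (?s j)" by (rule sed)
        have "card (orbit ?s (C ! 0)) = k" using cperm_orbit[OF dC lC] cardC by simp
        thus "\<exists>i\<in>mv ?s. card (orbit ?s i) = k" using smv x0 by blast
      qed
      have iS: "pinv ?s permutes {0..<n}" using permutes_inv[OF spn] .
      have imv: "mv (pinv ?s) = set C" using mv_inv[OF sperm] smv by simp
      have iQ: "Qd E k (pinv ?s)" unfolding Qd_def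
      proof (intro conjI ballI)
        fix j assume j: "j \<in> mv (pinv ?s)"
        let ?l = "pinv ?s j"
        have l: "?l \<in> set C" using permutes_in_image[OF permutes_inv[OF sp]] j imv by simp
        have "E ?l (?s ?l)" using sed smv l by blast
        hence "E ?l j" using permutes_inverses(1)[OF sp] by simp
        thus "E j (pinv ?s j)" using sym_E[OF sg] by blast
      next
        have "card (orbit (pinv ?s) (C ! 0)) = k"
          using orbit_inv_eq[OF sperm] cperm_orbit[OF dC lC] cardC by simp
        thus "\<exists>i\<in>mv (pinv ?s). card (orbit (pinv ?s) i) = k" using imv x0 by blast
      qed
      have S2: "S2 = {?s, pinv ?s}"
      proof
        show "S2 \<subseteq> {?s, pinv ?s}"
        proof
          fix p assume p: "p \<in> S2"
          hence pS: "p permutes {0..<n}" and mk: "card (mv p) = k" and Q: "Qd E k p" unfolding S2_def Pk_def by auto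
          obtain i where i: "i \<in> mv p" "card (orbit p i) = k" using Q unfolding Qd_def by blast
          have "\<And>j. j \<in> mv p \<Longrightarrow> E j (p j)" using Q unfolding Qd_def by blast
          thus "p \<in> {?s, pinv ?s}" using bridge3[OF D C k pS mk _ i] by blast
        qed
        show "{?s, pinv ?s} \<subseteq> S2"
          using spn iS smv imv cardC sQ iQ unfolding S2_def Pk_def by auto
      qed
      have neq: "?s \<noteq> pinv ?s" using cperm_neq_inv[OF dC lC] .
      have split: "(\<Sum>p\<in>Pk. ?f a p) = (\<Sum>p\<in>S1. ?f a p) + (\<Sum>p\<in>S2. ?f a p)" for a
      proof -
        have u: "S1 \<union> S2 = Pk" unfolding S1_def S2_def by blast
        have "S1 \<subseteq> Pk" "S2 \<subseteq> Pk" unfolding S1_def S2_def by auto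
        hence fin: "finite S1" "finite S2" using finite_subset fPk by auto
        have "S1 \<inter> S2 = {}" unfolding S1_def S2_def by blast
        hence "sum (?f a) (S1 \<union> S2) = sum (?f a) S1 + sum (?f a) S2"
          by (rule sum.union_disjoint[OF fin])
        thus ?thesis unfolding u .
      qed
      have s1': "(\<Sum>p\<in>S1. ?f ?a2 p) = (\<Sum>p\<in>S1. ?f ?a1 p)" using s1 by simp
      have "(\<Sum>p\<in>S2. ?f ?a1 p) = (\<Sum>p\<in>S2. ?f ?a2 p)"
        using ceq unfolding split[of ?a1] split[of ?a2] s1' by simp
      hence "?f ?a1 ?s + ?f ?a1 (pinv ?s) = ?f ?a2 ?s + ?f ?a2 (pinv ?s)"
        unfolding S2 using neq by simp
      moreover have "?f a (pinv ?s) = of_int (sign ?s) * cnj (cp a ?s)" if "herm a" for a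
        using cp_inv[OF sperm that] sign_inverse[OF sperm] by simp
      ultimately have "of_int (sign ?s) * (cp ?a1 ?s + cnj (cp ?a1 ?s)) = of_int (sign ?s) * (cp ?a2 ?s + cnj (cp ?a2 ?s))"
        using h1 h2 by (simp add: distrib_left)
      hence "cp ?a1 ?s + cnj (cp ?a1 ?s) = cp ?a2 ?s + cnj (cp ?a2 ?s)" by simp
      hence "Re (cp ?a1 ?s) = Re (cp ?a2 ?s)" by (simp add: complex_add_cnj)
      thus "Re (cycle_gain \<phi>1 C) = Re (cycle_gain \<phi>2 C)" using cycle_cp[OF C] by simp
    qed
  qed
  show ?thesis using main by blast
qed

lemma spec_iff:
  assumes A: "A \<in> carrier_mat n n" and B: "B \<in> carrier_mat n n"
  shows "spec A = spec B \<longleftrightarrow> char_poly A = char_poly B"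
proof
  assume "spec A = spec B"
  have lA: "lead_coeff (char_poly A) = 1" using degree_monic_char_poly[OF A] by simp
  have lB: "lead_coeff (char_poly B) = 1" using degree_monic_char_poly[OF B] by simp
  have "char_poly A = (\<Prod>x\<in>#spec A. [:-x, 1:])"
    using complex_poly_decompose_multiset[of "char_poly A"] lA unfolding spec_def by simp
  also have "\<dots> = (\<Prod>x\<in>#spec B. [:-x, 1:])" using \<open>spec A = spec B\<close> by simp
  also have "\<dots> = char_poly B"
    using complex_poly_decompose_multiset[of "char_poly B"] lB unfolding spec_def by simp
  finally show "char_poly A = char_poly B" .
qed (simp add: spec_def)

theorem theorem3p5:
  fixes n :: nat and E :: "nat \<Rightarrow> nat \<Rightarrow> bool" and \<phi>1 \<phi>2 :: "nat \<Rightarrow> nat \<Rightarrow> complex"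
  assumes "in_D n E" and "T_gain E \<phi>1" and "T_gain E \<phi>2"
  shows "spec (gain_adj n E \<phi>1) = spec (gain_adj n E \<phi>2) \<longleftrightarrow>
    (\<forall>C. is_cycle n E C \<longrightarrow> Re (cycle_gain \<phi>1 C) = Re (cycle_gain \<phi>2 C))"
proof -
  have sg: "simple_graph n E" using assms(1) unfolding in_D_def connected_graph_def by blast
  have c: "gain_adj n E \<phi> \<in> carrier_mat n n" for \<phi> unfolding gain_adj_def by simp
  show ?thesis unfolding spec_iff[OF c c]
    using dir_fwd[OF assms] dir_back[OF sg assms(2,3)] by blast
qed


end
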